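(* Let $n\ge5$ be odd, $k=\frac{n-3}{2}$, $G=(V,E)=K_n$, let $C=(v_1,\dots,v_{2k+1})$ be a cycle of length $n-2$ in $G$ and $s,t$ the two vertices not on $C$. Then the $C$-induced constraint $x_{\{s,t\}}+k\cdot x(\delta(V(C)))+\sum_{e\in E[V\setminus\{s,t\}]}\ell(e)x_e\ge 2k+1$ is $(n-1)$-expressing.
   Context: $\delta(V(C))$ is the set of edges with exactly one endpoint on $C$, $E[S]$ the set of edges with both endpoints in $S$, $x(S)=\sum_{e\in S}x_e$. For $i\ne j$, $\ell(\{v_i,v_j\})=|j-i|$ if $|j-i|$ is odd and $2k+1-|j-i|$ otherwise. Expressibility of a constraint $a^\top x\ge b$ valid for the dominant of the odd cycle polytope of $G$: let $\mathcal{T}$ be the set of odd cycles $D$ of $G$ with $a^\top\chi^D=b$. For $Q\subseteq E$, the set $E_Q$ of $Q$-expressible edges is obtained by starting with $E_Q=Q$ and, as long as there exist $e\in E\setminus E_Q$ and $D\in\mathcal{T}$ with $e\in D$ and $D\setminus\{e\}\subseteq E_Q$, adding $e$ to $E_Q$. The constraint is $k'$-expressing if there is $Q\subseteq E$ with $|Q|\le k'$ and $E_Q=E$. *)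

theory Defs
  imports Complex_Main
begin

definition complete_edges :: "'a set \<Rightarrow> 'a set set" where
  "complete_edges V = {{u, w} | u w. u \<in> V \<and> w \<in> V \<and> u \<noteq> w}"

definition odd_cycle :: "'a set \<Rightarrow> 'a set set \<Rightarrow> bool" where
  "odd_cycle V D \<longleftrightarrow> (\<exists>m (w :: nat \<Rightarrow> 'a). odd m \<and> m \<ge> 3 \<and> inj_on w {..<m} \<and>
      w ` {..<m} \<subseteq> V \<and> D = {{w i, w ((i + 1) mod m)} | i. i < m})"

definition tight_cycles :: "'a set \<Rightarrow> ('a set \<Rightarrow> real) \<Rightarrow> real \<Rightarrow> 'a set set set" where
  "tight_cycles V a b = {D. odd_cycle V D \<and> (\<Sum>e\<in>D. a e) = b}"

inductive_set expressible :: "'a set set set \<Rightarrow> 'a set set \<Rightarrow> 'a set set"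
  for T :: "'a set set set" and Q :: "'a set set" where
  base: "e \<in> Q \<Longrightarrow> e \<in> expressible T Q"
| step: "D \<in> T \<Longrightarrow> e \<in> D \<Longrightarrow> (\<forall>f\<in>D - {e}. f \<in> expressible T Q) \<Longrightarrow> e \<in> expressible T Q"

definition k_expressing :: "'a set \<Rightarrow> ('a set \<Rightarrow> real) \<Rightarrow> real \<Rightarrow> nat \<Rightarrow> bool" where
  "k_expressing V a b k' \<longleftrightarrow> (\<exists>Q. Q \<subseteq> complete_edges V \<and> card Q \<le> k' \<and>
      expressible (tight_cycles V a b) Q = complete_edges V)"

definition ell_idx :: "nat \<Rightarrow> nat \<Rightarrow> nat \<Rightarrow> nat" where
  "ell_idx k i j = (let d = (if i \<le> j then j - i else i - j) in
      if odd d then d else 2 * k + 1 - d)"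

definition ell :: "(nat \<Rightarrow> 'a) \<Rightarrow> nat \<Rightarrow> 'a set \<Rightarrow> nat" where
  "ell v k e = (THE l. \<exists>i\<in>{1..2*k+1}. \<exists>j\<in>{1..2*k+1}. i \<noteq> j \<and> e = {v i, v j} \<and> l = ell_idx k i j)"

definition cut_edges :: "'a set \<Rightarrow> 'a set \<Rightarrow> 'a set set" where
  "cut_edges V S = {e \<in> complete_edges V. card (e \<inter> S) = 1}"

definition induced_edges :: "'a set \<Rightarrow> 'a set \<Rightarrow> 'a set set" where
  "induced_edges V S = {e \<in> complete_edges V. e \<subseteq> S}"

definition C_induced_coeff :: "'a set \<Rightarrow> (nat \<Rightarrow> 'a) \<Rightarrow> nat \<Rightarrow> 'a \<Rightarrow> 'a \<Rightarrow> 'a set \<Rightarrow> real" where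
  "C_induced_coeff V v k s t e =
     (if e = {s, t} then 1 else 0)
   + (if e \<in> cut_edges V (v ` {1..2*k+1}) then real k else 0)
   + (if e \<in> induced_edges V (V - {s, t}) then real (ell v k e) else 0)"

end

theory Submission
  imports Defs
begin

lemma ell_idx_sym: "ell_idx k i j = ell_idx k j i"
  unfolding ell_idx_def Let_def by auto

lemma ell_idx_cyc:
  assumes "N = 2*k+1" "0 < r" "r < N"
  shows "ell_idx k (x mod N + 1) ((x + r) mod N + 1) = (if even r then N - r else r)"
proof -
  define p where "p = x mod N"
  have pN: "p < N" using assms p_def by auto
  have e: "(x + r) mod N = (p + r) mod N" unfolding p_def by (simp add: mod_add_left_eq)
  show ?thesis
  proof (cases "p + r < N")
    case True
    then have "(p+r) mod N = p + r" by simp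
    have "ell_idx k (p+1) (p+r+1) = (if odd r then r else 2*k+1-r)" unfolding ell_idx_def Let_def by simp
    then show ?thesis unfolding e p_def[symmetric] \<open>(p+r) mod N = p + r\<close> using assms(1) by simp
  next
    case False
    then have "(p+r) mod N = p + r - N" using pN assms
      by (simp add: le_mod_geq)
    have d: "(if p + 1 \<le> p+r-N+1 then (p+r-N+1) - (p+1) else (p+1) - (p+r-N+1)) = N - r"
      using assms False pN by auto
    have o: "odd (N - r) \<longleftrightarrow> even r" using assms by presburger
    have "ell_idx k (p+1) (p+r-N+1) = (if odd (N-r) then N-r else 2*k+1-(N-r))"
      unfolding ell_idx_def Let_def d by simp
    also have "\<dots> = (if even r then N - r else r)" using o assms(1,3) by auto
    finally show ?thesis unfolding e p_def[symmetric] \<open>(p+r) mod N = p + r - N\<close> .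
  qed
qed

lemma cycle_inj:
  assumes "(m::nat) \<ge> 3" "inj_on w {..<m}"
  shows "inj_on (\<lambda>i. {w i, w ((i+1) mod m)}) {..<m}"
proof (rule inj_onI)
  fix i j assume i: "i \<in> {..<m}" and j: "j \<in> {..<m}"
    and eq: "{w i, w ((i+1) mod m)} = {w j, w ((j+1) mod m)}"
  have i1: "(i+1) mod m \<in> {..<m}" "(j+1) mod m \<in> {..<m}" using assms by auto
  from eq have "(w i = w j \<and> w ((i+1) mod m) = w ((j+1) mod m)) \<or> (w i = w ((j+1) mod m) \<and> w ((i+1) mod m) = w j)"
    by (auto simp: doubleton_eq_iff)
  then show "i = j"
  proof
    assume "w i = w j \<and> w ((i+1) mod m) = w ((j+1) mod m)"
    then show ?thesis using assms(2) i j by (auto dest: inj_onD)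
  next
    assume "w i = w ((j+1) mod m) \<and> w ((i+1) mod m) = w j"
    then have a: "i = (j+1) mod m" and b: "(i+1) mod m = j" using assms(2) i j i1 by (auto dest: inj_onD)
    show ?thesis
    proof (cases "j + 1 < m")
      case True
      then have "i = j + 1" using a by simp
      then have b2: "(j+2) mod m = j" using b by (simp add: add.assoc)
      show ?thesis
      proof (cases "j + 2 < m")
        case True then show ?thesis using b2 by simp
      next
        case False then have "j + 2 = m" using \<open>j+1<m\<close> by simp
        then show ?thesis using b2 assms by auto
      qed
    next
      case False
      then have "j + 1 = m" using j by auto
      then have "i = 0" using a by simp
      then show ?thesis using b assms \<open>j+1 = m\<close> by simp
    qed
  qed
qed

lemma cycle_sum:
  assumes "(m::nat) \<ge> 3" "inj_on w {..<m}"
  shows "(\<Sum>e\<in>{{w i, w ((i+1) mod m)} | i. i < m}. f e) = (\<Sum>i<m. f {w i, w ((i+1) mod m)})"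
proof -
  have eq: "{{w i, w ((i+1) mod m)} | i. i < m} = (\<lambda>i. {w i, w ((i+1) mod m)}) ` {..<m}" by auto
  show ?thesis unfolding eq sum.reindex[OF cycle_inj[OF assms]] comp_def ..
qed

lemma odd_cycle_edges: "odd_cycle V D \<Longrightarrow> D \<subseteq> complete_edges V"
  unfolding odd_cycle_def complete_edges_def
proof (elim exE conjE)
  fix m :: nat and w assume m: "m \<ge> 3" "inj_on w {..<m}" "w ` {..<m} \<subseteq> V" "D = {{w i, w ((i+1) mod m)} | i. i < m}"
  show "D \<subseteq> {{u, w} | u w. u \<in> V \<and> w \<in> V \<and> u \<noteq> w}"
  proof
    fix e assume "e \<in> D"
    then obtain i where i: "i < m" "e = {w i, w ((i+1) mod m)}" using m(4) by blast
    have i1: "(i+1) mod m < m" using m(1) by simp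
    have ne: "(i+1) mod m \<noteq> i"
    proof (cases "i+1 < m")
      case True then show ?thesis by simp
    next
      case False then have "i+1 = m" using i by simp
      then show ?thesis using m(1) by auto
    qed
    have "w i \<noteq> w ((i+1) mod m)"
    proof
      assume "w i = w ((i+1) mod m)"
      then have "i = (i+1) mod m" using inj_onD[OF m(2)] i(1) i1 by simp
      then show False using ne by simp
    qed
    moreover have "w i \<in> V" "w ((i+1) mod m) \<in> V" using m(3) i(1) i1 by auto
    ultimately show "e \<in> {{u, w} | u w. u \<in> V \<and> w \<in> V \<and> u \<noteq> w}" unfolding i(2)
      by (intro CollectI exI[of _ "w i"] exI[of _ "w ((i+1) mod m)"]) simp
  qed
qed

lemma expressible_sub:
  assumes "\<And>D. D \<in> T \<Longrightarrow> D \<subseteq> A" "Q \<subseteq> A"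
  shows "expressible T Q \<subseteq> A"
proof
  fix e assume "e \<in> expressible T Q" then show "e \<in> A"
    by induction (use assms in auto)
qed

lemma triangle:
  assumes "x \<in> V" "y \<in> V" "z \<in> V" "x \<noteq> y" "y \<noteq> z" "x \<noteq> z"
  shows "odd_cycle V {{x,y},{y,z},{z,x}}"
  unfolding odd_cycle_def
proof (intro exI conjI)
  let ?w = "\<lambda>i::nat. if i = 0 then x else if i = 1 then y else z"
  show "odd (3::nat)" by simp
  show "(3::nat) \<le> 3" by simp
  show "inj_on ?w {..<3}" using assms by (auto simp: inj_on_def)
  show "?w ` {..<3} \<subseteq> V" using assms by auto
  have 3: "{..<3::nat} = {0,1,2}" by auto
  have "{{?w i, ?w ((i+1) mod 3)} | i. i < 3} = (\<lambda>i. {?w i, ?w ((i+1) mod 3)}) ` {..<3}" by blast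
  also have "\<dots> = {{x,y},{y,z},{z,x}}" unfolding 3 by (simp add: insert_commute)
  finally show "{{x,y},{y,z},{z,x}} = {{?w i, ?w ((i+1) mod 3)} | i. i < 3}" by simp
qed

lemma triangle_sum:
  assumes "x \<noteq> y" "y \<noteq> z" "x \<noteq> z"
  shows "(\<Sum>e\<in>{{x,y},{y,z},{z,x}}. f e) = f {x,y} + f {y,z} + f {z,x}"
  using assms by (simp add: doubleton_eq_iff insert_commute ac_simps)


lemma mod_inj_lt:
  fixes N :: nat
  assumes "(x + l) mod N = (x + l') mod N" "l < N" "l' < N"
  shows "l = l'"
proof -
  { fix a b :: nat assume ab: "a \<le> b" "(x + a) mod N = (x + b) mod N" "b < N"
    then have "N dvd (x + b) - (x + a)" using mod_eq_dvd_iff_nat[of "x+a" "x+b" N] by simp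
    then have "N dvd b - a" by simp
    moreover have "b - a < N" using ab by simp
    ultimately have "b - a = 0" using dvd_imp_le by (metis gr0I not_less)
    then have "a = b" using ab by simp }
  note * = this
  show ?thesis
  proof (cases "l \<le> l'")
    case True then show ?thesis using * assms by blast
  next
    case False then show ?thesis using *[of l' l] assms by simp
  qed
qed


theorem lemma10:
  fixes V :: "'a set" and n k :: nat and v :: "nat \<Rightarrow> 'a" and s t :: 'a
  assumes "finite V" and "card V = n" and "odd n" and "n \<ge> 5"
    and "k = (n - 3) div 2"
    and "inj_on v {1..2*k+1}" and "v ` {1..2*k+1} \<subseteq> V"
    and "s \<noteq> t" and "V - v ` {1..2*k+1} = {s, t}"
  shows "k_expressing V (C_induced_coeff V v k s t) (real (2*k+1)) (n - 1)"
proof -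
  define N where "N = 2*k+1"
  have nk: "n = 2*k+3" using assms(3,4,5) by presburger
  have k1: "k \<ge> 1" using nk assms(4) by simp
  have N3: "N \<ge> 3" using k1 N_def by simp
  define C where "C = v ` {1..N}"
  have CV: "C \<subseteq> V" using assms(7) C_def N_def by simp
  have VC: "V - C = {s,t}" using assms(9) C_def N_def by simp
  have sV: "s \<in> V" "t \<in> V" "s \<notin> C" "t \<notin> C" using VC by blast+
  have injv: "inj_on v {1..N}" using assms(6) N_def by simp
  define u where "u x = v (x mod N + 1)" for x
  have uC: "u x \<in> C" for x
  proof -
    have "x mod N < N" using N3 by simp
    then have "x mod N + 1 \<in> {1..N}" by simp
    then show ?thesis unfolding u_def C_def by (rule imageI)
  qed
  have uV: "u x \<in> V" for x using uC CV by blast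
  have us: "u x \<noteq> s" "u x \<noteq> t" for x using uC sV by metis+
  have u_eq: "u x = u y \<longleftrightarrow> x mod N = y mod N" for x y
  proof
    assume "u x = u y"
    moreover have "x mod N + 1 \<in> {1..N}" "y mod N + 1 \<in> {1..N}"
      using N3 by (simp_all add: Suc_leI)
    ultimately have "x mod N + 1 = y mod N + 1" unfolding u_def
      using inj_onD[OF injv] by blast
    then show "x mod N = y mod N" by simp
  qed (simp add: u_def)
  have u_mod: "u x = u (x mod N)" for x unfolding u_def by simp
  have Cu: "\<exists>x<N. c = u x" if cC: "c \<in> C" for c
  proof -
    obtain i where i: "i \<in> {1..N}" "c = v i" using cC C_def by blast
    have i1: "i - 1 < N" using i by auto
    then have "(i - 1) mod N + 1 = i" using i by simp
    then have "c = u (i - 1)" unfolding u_def using i by simp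
    moreover note i1
    ultimately show ?thesis by blast
  qed
  have VCst: "V = C \<union> {s,t}" using CV VC sV by blast
  define a where "a = C_induced_coeff V v k s t"
  define T where "T = tight_cycles V a (real N)"
  have a_def2: "a e = (if e = {s, t} then 1 else 0)
     + (if e \<in> cut_edges V C then real k else 0)
     + (if e \<in> induced_edges V (V - {s, t}) then real (ell v k e) else 0)" for e
    unfolding a_def C_induced_coeff_def C_def N_def ..
  have w_st: "a {s,t} = 1"
  proof -
    have "{s,t} \<inter> C = {}" using sV by blast
    then have "{s,t} \<notin> cut_edges V C" unfolding cut_edges_def by simp
    moreover have "{s,t} \<notin> induced_edges V (V - {s, t})" unfolding induced_edges_def by blast
    ultimately show ?thesis unfolding a_def2 by simp
  qed
  have w_su: "a {z, u x} = real k" if "z = s \<or> z = t" for z x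
  proof -
    have "{z, u x} \<noteq> {s,t}" using us that by (metis doubleton_eq_iff)
    moreover have "{z, u x} \<inter> C = {u x}" using uC sV that by blast
    then have "{z, u x} \<in> cut_edges V C" unfolding cut_edges_def complete_edges_def
      using uV sV that us by auto
    moreover have "{z, u x} \<notin> induced_edges V (V - {s, t})" unfolding induced_edges_def using that by blast
    ultimately show ?thesis unfolding a_def2 by simp
  qed
  have ell_eq: "ell v k {v i, v j} = ell_idx k i j" if ij: "i \<in> {1..N}" "j \<in> {1..N}" "i \<noteq> j" for i j
    unfolding ell_def
  proof (rule the_equality)
    show "\<exists>i'\<in>{1..2*k+1}. \<exists>j'\<in>{1..2*k+1}. i' \<noteq> j' \<and> {v i, v j} = {v i', v j'} \<and> ell_idx k i j = ell_idx k i' j'"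
      using ij N_def by blast
  next
    fix l assume "\<exists>i'\<in>{1..2*k+1}. \<exists>j'\<in>{1..2*k+1}. i' \<noteq> j' \<and> {v i, v j} = {v i', v j'} \<and> l = ell_idx k i' j'"
    then obtain i' j' where h: "i' \<in> {1..N}" "j' \<in> {1..N}" "{v i, v j} = {v i', v j'}" "l = ell_idx k i' j'"
      unfolding N_def by blast
    from h(3) have "(v i = v i' \<and> v j = v j') \<or> (v i = v j' \<and> v j = v i')" by (simp add: doubleton_eq_iff)
    then have "(i = i' \<and> j = j') \<or> (i = j' \<and> j = i')" using inj_onD[OF injv] ij h(1,2) by metis
    then show "l = ell_idx k i j" using h(4) ell_idx_sym by metis
  qed
  have w_uu: "a {u x, u y} = real (ell_idx k (x mod N + 1) (y mod N + 1))" if xy: "x mod N \<noteq> y mod N" for x y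
  proof -
    have ne: "u x \<noteq> u y" using u_eq xy by simp
    have "{u x, u y} \<noteq> {s,t}" using us by (metis doubleton_eq_iff)
    moreover have "{u x, u y} \<inter> C = {u x, u y}" using uC by blast
    then have "{u x, u y} \<notin> cut_edges V C" unfolding cut_edges_def using ne by simp
    moreover have "{u x, u y} \<in> induced_edges V (V - {s, t})" unfolding induced_edges_def complete_edges_def
      using uV us ne by blast
    moreover have "ell v k {u x, u y} = ell_idx k (x mod N + 1) (y mod N + 1)"
    proof -
      have x1: "x mod N < N" using N3 by simp
      have y1: "y mod N < N" using N3 by simp
      have "x mod N + 1 \<in> {1..N}" "y mod N + 1 \<in> {1..N}" using Suc_leI[OF x1] Suc_leI[OF y1] by auto
      then show ?thesis unfolding u_def using ell_eq[of "x mod N + 1" "y mod N + 1"] xy by simp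
    qed
    ultimately show ?thesis unfolding a_def2 by simp
  qed
  have w_cons: "a {u x, u (x+1)} = 1" for x
  proof -
    have "x mod N \<noteq> (x+1) mod N"
    proof
      assume "x mod N = (x+1) mod N"
      then have "(x+0) mod N = (x+1) mod N" by simp
      then have "(0::nat) = 1" by (rule mod_inj_lt) (use N3 in auto)
      then show False by simp
    qed
    then have "a {u x, u (x+1)} = real (ell_idx k (x mod N + 1) ((x+1) mod N + 1))" by (rule w_uu)
    also have "\<dots> = 1" using ell_idx_cyc[of N k 1 x] N_def N3 by simp
    finally show ?thesis .
  qed
  have cons_ne: "x mod N \<noteq> (x+r) mod N" if "0 < r" "r < N" for x r
  proof
    assume "x mod N = (x+r) mod N"
    then have "(x+0) mod N = (x+r) mod N" by simp
    then have "(0::nat) = r" by (rule mod_inj_lt) (use that in auto)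
    then show False using that by simp
  qed
  have w_close: "a {u (x + (m-1)), u x} = real (N - (m-1))" if m: "odd m" "3 \<le> m" "m \<le> N" for x m
  proof -
    have r: "0 < m - 1" "m - 1 < N" "even (m-1)" using m by auto
    have "a {u (x + (m-1)), u x} = a {u x, u (x + (m-1))}" by (simp add: insert_commute)
    also have "\<dots> = real (ell_idx k (x mod N + 1) ((x + (m-1)) mod N + 1))"
      by (rule w_uu) (rule cons_ne[OF r(1,2)])
    also have "\<dots> = real (N - (m-1))" using ell_idx_cyc[OF N_def r(1,2), of x] r(3) by simp
    finally show ?thesis .
  qed
  define Dc where "Dc x m = {{u (x+l), u (x + (l+1) mod m)} | l. l < m}" for x m
  have Dc_T: "Dc x m \<in> T" if m: "odd m" "3 \<le> m" "m \<le> N" for x m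
  proof -
    let ?w = "\<lambda>l. u (x+l)"
    have inj: "inj_on ?w {..<m}"
    proof (rule inj_onI)
      fix l l' assume l: "l \<in> {..<m}" "l' \<in> {..<m}" and "u (x+l) = u (x+l')"
      then have "(x+l) mod N = (x+l') mod N" using u_eq by simp
      then show "l = l'" by (rule mod_inj_lt) (use l m in auto)
    qed
    have img: "?w ` {..<m} \<subseteq> V" using uV by blast
    have oc: "odd_cycle V (Dc x m)" unfolding odd_cycle_def Dc_def
      by (rule exI[of _ m], rule exI[of _ ?w]) (use m inj img in simp)
    have "(\<Sum>e\<in>Dc x m. a e) = (\<Sum>l<m. a {?w l, ?w ((l+1) mod m)})"
      unfolding Dc_def using cycle_sum[OF m(2) inj, of a] by simp
    also have "\<dots> = (\<Sum>l<m-1. a {?w l, ?w ((l+1) mod m)}) + a {?w (m-1), ?w ((m-1+1) mod m)}"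
    proof -
      obtain m' where m': "m = Suc m'" using m by (cases m) auto
      show ?thesis unfolding m' by (simp only: sum.lessThan_Suc diff_Suc_1)
    qed
    also have "(\<Sum>l<m-1. a {?w l, ?w ((l+1) mod m)}) = (\<Sum>l<m-1. 1)"
    proof (rule sum.cong)
      fix l assume "l \<in> {..<m-1}"
      then have "(l+1) mod m = l + 1" by simp
      then show "a {?w l, ?w ((l+1) mod m)} = 1" using w_cons[of "x+l"] by (simp add: add.assoc)
    qed simp
    also have "a {?w (m-1), ?w ((m-1+1) mod m)} = real (N - (m-1))"
    proof -
      have "(m-1+1) mod m = 0" using m by simp
      then show ?thesis using w_close[OF m, of x] by simp
    qed
    also have "(\<Sum>l<m-1. (1::real)) + real (N - (m-1)) = real N" using m by simp
    finally have "(\<Sum>e\<in>Dc x m. a e) = real N" .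
    then show ?thesis unfolding T_def tight_cycles_def using oc by simp
  qed
  have tri_T: "{{x,y},{y,z},{z,x}} \<in> T"
    if "x \<in> V" "y \<in> V" "z \<in> V" "x \<noteq> y" "y \<noteq> z" "x \<noteq> z" "a {x,y} + a {y,z} + a {z,x} = real N" for x y z
    unfolding T_def tight_cycles_def using triangle[of x V y z] triangle_sum[of x y z a] that by simp
  define P where "P = (\<lambda>l. {u l, u (l+1)}) ` {..<2*k}"
  define Q where "Q = P \<union> {{s,t},{s,u 0}}"
  define X where "X = expressible T Q"
  have QX: "e \<in> Q \<Longrightarrow> e \<in> X" for e unfolding X_def by (rule expressible.base)
  have stepX: "e \<in> X" if "D \<in> T" "e \<in> D" "\<And>f. f \<in> D \<Longrightarrow> f \<noteq> e \<Longrightarrow> f \<in> X" for D e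
    unfolding X_def using that(1,2) by (rule expressible.step) (use that(3) X_def in blast)
  have closeX: "{u (x + (m-1)), u x} \<in> X"
    if m: "odd m" "3 \<le> m" "m \<le> N" and h: "\<And>l. l < m-1 \<Longrightarrow> {u (x+l), u (x+l+1)} \<in> X" for x m
  proof (rule stepX[OF Dc_T[OF m, of x]])
    have z: "(m-1+1) mod m = 0" using m by simp
    show "{u (x + (m-1)), u x} \<in> Dc x m" unfolding Dc_def
      by (rule CollectI, rule exI[of _ "m-1"]) (use z m in simp)
  next
    fix f assume f: "f \<in> Dc x m" "f \<noteq> {u (x + (m-1)), u x}"
    obtain l where l: "l < m" "f = {u (x+l), u (x + (l+1) mod m)}" using f(1) unfolding Dc_def by blast
    show "f \<in> X"
    proof (cases "l = m-1")
      case True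
      then have "(l+1) mod m = 0" using m by simp
      then have "f = {u (x + (m-1)), u x}" using l True by simp
      then show ?thesis using f(2) by simp
    next
      case False
      then have l1: "l < m-1" using l by simp
      then have "(l+1) mod m = l+1" by simp
      then have "f = {u (x+l), u (x+l+1)}" using l by (simp add: add.assoc)
      then show ?thesis using h[OF l1] by simp
    qed
  qed
  have NN: "N = 2*k+1" by (rule N_def)
  have wrapX: "{u (0 + (N-1)), u 0} \<in> X"
  proof (rule closeX)
    show "odd N" "3 \<le> N" "N \<le> N" using N_def N3 by auto
  next
    fix l assume "l < N - 1"
    then have "l \<in> {..<2*k}" using N_def by simp
    then have "{u l, u (l+1)} \<in> Q" unfolding Q_def P_def by blast
    then show "{u (0+l), u (0+l+1)} \<in> X" using QX by simp
  qed
  have consX: "{u x, u (x+1)} \<in> X" for x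
  proof -
    define p where "p = x mod N"
    have pN: "p < N" using N3 p_def by simp
    have e1: "u x = u p" using u_mod p_def by simp
    have e2: "u (x+1) = u (p+1)" unfolding u_eq p_def using mod_Suc_eq[of x N] by simp
    show ?thesis
    proof (cases "p < 2*k")
      case True
      then have "{u p, u (p+1)} \<in> Q" unfolding Q_def P_def by blast
      then show ?thesis using QX e1 e2 by simp
    next
      case False
      then have "p = N - 1" using pN N_def by simp
      moreover have "u (N-1+1) = u 0" using N3 u_eq by simp
      ultimately show ?thesis using wrapX e1 e2 by simp
    qed
  qed
  have chord_lt: "{u p, u q} \<in> X" if pq: "p < q" "q < N" for p q
  proof (cases "even (q - p)")
    case True
    have m: "odd (q-p+1)" "3 \<le> q-p+1" "q-p+1 \<le> N" using True pq by presburger+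
    have "{u (p + (q-p+1-1)), u p} \<in> X" by (rule closeX[OF m]) (use consX in simp)
    then show ?thesis using pq by (simp add: insert_commute)
  next
    case False
    have m: "odd (N-(q-p)+1)" "3 \<le> N-(q-p)+1" "N-(q-p)+1 \<le> N" using False pq NN by presburger+
    have "{u (q + (N-(q-p)+1-1)), u q} \<in> X" by (rule closeX[OF m]) (use consX in simp)
    moreover have "u (q + (N-(q-p)+1-1)) = u p"
    proof -
      have "q + (N-(q-p)+1-1) = p + N" using pq by simp
      then show ?thesis unfolding u_eq by simp
    qed
    ultimately show ?thesis by simp
  qed
  have chordX: "{u x, u y} \<in> X" if xy: "x mod N \<noteq> y mod N" for x y
  proof -
    have "x mod N < N" "y mod N < N" using N3 by simp_all
    then have "{u (x mod N), u (y mod N)} \<in> X"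
      using chord_lt[of "x mod N" "y mod N"] chord_lt[of "y mod N" "x mod N"] xy
      by (cases "x mod N < y mod N") (auto simp: insert_commute)
    then show ?thesis using u_mod[of x] u_mod[of y] by simp
  qed
  have sX: "{s, u j} \<in> X" for j
  proof (induction j)
    case 0
    then show ?case using QX Q_def by simp
  next
    case (Suc j)
    have ne: "u j \<noteq> u (j+1)" using u_eq cons_ne[of 1 j] N3 by simp
    have "{u (j+1), s} \<in> X"
    proof (rule stepX[OF tri_T[of s "u j" "u (j+1)"]])
      show "s \<in> V" "u j \<in> V" "u (j+1) \<in> V" "s \<noteq> u j" "u j \<noteq> u (j+1)" "s \<noteq> u (j+1)"
        using sV uV us ne by metis+
      have "a {u (j+1), s} = real k" using w_su[of s "j+1"] by (simp add: insert_commute)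
      then show "a {s, u j} + a {u j, u (j+1)} + a {u (j+1), s} = real N"
        using w_su[of s j] w_cons[of j] N_def by simp
      show "{u (j+1), s} \<in> {{s, u j}, {u j, u (j+1)}, {u (j+1), s}}" by simp
    next
      fix f assume "f \<in> {{s, u j}, {u j, u (j+1)}, {u (j+1), s}}" "f \<noteq> {u (j+1), s}"
      then show "f \<in> X" using Suc.IH consX[of j] by auto
    qed
    then show ?case by (simp add: insert_commute)
  qed
  have tX: "{t, u j} \<in> X" for j
  proof (rule stepX[OF tri_T[of s t "u j"]])
    show "s \<in> V" "t \<in> V" "u j \<in> V" "s \<noteq> t" "t \<noteq> u j" "s \<noteq> u j"
      using sV uV us assms(8) by metis+
    have "a {u j, s} = real k" using w_su[of s j] by (simp add: insert_commute)
    then show "a {s, t} + a {t, u j} + a {u j, s} = real N"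
      using w_st w_su[of t j] N_def by simp
    show "{t, u j} \<in> {{s, t}, {t, u j}, {u j, s}}" by simp
  next
    fix f assume "f \<in> {{s, t}, {t, u j}, {u j, s}}" "f \<noteq> {t, u j}"
    then show "f \<in> X" using QX[of "{s,t}"] Q_def sX[of j] by (auto simp: insert_commute)
  qed
  have QE: "Q \<subseteq> complete_edges V"
  proof
    fix e assume "e \<in> Q"
    then consider (P) l where "e = {u l, u (l+1)}" | (st) "e = {s,t}" | (su) "e = {s, u 0}"
      unfolding Q_def P_def by blast
    then show "e \<in> complete_edges V"
    proof cases
      case P
      have "u l \<noteq> u (l+1)" using u_eq cons_ne[of 1 l] N3 by simp
      then show ?thesis unfolding complete_edges_def P using uV by blast
    next
      case st then show ?thesis unfolding complete_edges_def using sV assms(8) by blast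
    next
      case su then show ?thesis unfolding complete_edges_def using sV uV us by blast
    qed
  qed
  have XE: "X \<subseteq> complete_edges V" unfolding X_def
  proof (rule expressible_sub[OF _ QE])
    fix D assume "D \<in> T"
    then have "odd_cycle V D" unfolding T_def tight_cycles_def by simp
    then show "D \<subseteq> complete_edges V" by (rule odd_cycle_edges)
  qed
  have EX: "complete_edges V \<subseteq> X"
  proof
    fix e assume "e \<in> complete_edges V"
    then obtain p q where pq: "e = {p,q}" "p \<in> V" "q \<in> V" "p \<noteq> q" unfolding complete_edges_def by blast
    have pc: "p \<in> C \<or> p = s \<or> p = t" "q \<in> C \<or> q = s \<or> q = t" using pq VCst by blast+
    show "e \<in> X"
    proof (cases "p \<in> C")
      case pC: True
      then obtain x where x: "x < N" "p = u x" using Cu by blast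
      show ?thesis
      proof (cases "q \<in> C")
        case True
        then obtain y where y: "y < N" "q = u y" using Cu by blast
        have "x mod N \<noteq> y mod N" using x y pq(4) u_eq by auto
        then show ?thesis using chordX pq(1) x y by simp
      next
        case False
        then have "q = s \<or> q = t" using pc by blast
        then show ?thesis using sX[of x] tX[of x] pq(1) x by (auto simp: insert_commute)
      qed
    next
      case pnC: False
      then have ps: "p = s \<or> p = t" using pc by blast
      show ?thesis
      proof (cases "q \<in> C")
        case True
        then obtain y where y: "y < N" "q = u y" using Cu by blast
        then show ?thesis using sX[of y] tX[of y] pq(1) ps by auto
      next
        case False
        then have "q = s \<or> q = t" using pc by blast
        then have "e = {s,t}" using ps pq by auto
        then show ?thesis using QX Q_def by simp
      qed
    qed
  qed
  have cardQ: "card Q \<le> n - 1"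
  proof -
    have "card P \<le> 2*k" unfolding P_def using card_image_le[of "{..<2*k}"] by simp
    moreover have "card {{s,t},{s,u 0}} \<le> 2"
      by (simp add: card_insert_if)
    ultimately have "card Q \<le> 2*k + 2" unfolding Q_def using card_Un_le[of P "{{s,t},{s,u 0}}"] by simp
    then show ?thesis using nk by simp
  qed
  show ?thesis unfolding k_expressing_def
    using QE cardQ XE EX unfolding X_def T_def a_def N_def by blast
qed

end
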